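(* Let $n,m,k$ be integers with $1\le k<m/2$. If $n$ and $m$ are sufficiently large, then $R_0(h_{k,n,m})=\Omega(nm)$.
   Context: Let $n,m$ be positive integers, $1\le k<m$ an integer, $M=[n]\times[m]$ (a grid of cells with $n$ rows and $m$ columns), $\tilde M=M\cup\{\bot\}$ (pointers to cells, $\bot$ the null pointer). Let $T$ be the following fixed binary tree with $m$ leaves and $m-1$ internal nodes: if $m=2^r$, $T$ is the complete binary tree with $2^r$ leaves; if $2^r<m<2^{r+1}$, take the complete binary tree with $2^r$ leaves and add a pair of children to each of its $m-2^r$ leftmost leaves. Outgoing arcs are labeled 'left'/'right', leaves labeled $1,\dots,m$ from left to right, and $T(j)$ is the sequence of labels on the root-to-leaf-$j$ path. The alphabet is $\Sigma=\{0,1\}\times\tilde M\times\tilde M\times\tilde M$ with components $\mathrm{val},\mathrm{lpoint},\mathrm{rpoint},\mathrm{ipoint}$. The function $h_{k,n,m}\colon\Sigma^M\to\{0,1\}$ has $h_{k,n,m}(x)=1$ iff: (1) there are exactly $k$ columns $b_1,\dots,b_k$ with $\mathrm{val}(x_{i,b_s})=1$ for all $i\in[n]$, $s\in[k]$ (marked columns); (2) each marked column $b_s$ contains a unique cell $a_s$ with $x_{a_s}\ne(1,\bot,\bot,\bot)$ (special elements); (3) $\mathrm{ipoint}(x_{a_s})=a_{s+1}$ for $s\in[k-1]$, $\mathrm{ipoint}(x_{a_k})=a_1$, and $\mathrm{lpoint}(x_{a_s})=\mathrm{lpoint}(x_{a_t})$, $\mathrm{rpoint}(x_{a_s})=\mathrm{rpoint}(x_{a_t})$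 for all $s,t\in[k]$; (4) for each non-marked column $j$, the path starting at a special element and following $\mathrm{lpoint},\mathrm{rpoint}$ as specified by $T(j)$ exists (no $\bot$ on it) and ends at a cell $\ell_j$ in column $j$ with $\mathrm{val}(x_{\ell_j})=0$. A query returns the symbol $x_c\in\Sigma$ of one cell. $R_0(f)$ is the minimum, over randomized decision trees always outputting $f(x)$, of the worst-case expected number of queries. *)

theory Defs
  imports "HOL-Probability.Probability"
begin

text \<open>A cell is (row, column); the grid M is [n] x [m]. A pointer is a cell option
  (None = the null pointer). A symbol is (val, lpoint, rpoint, ipoint), with val
  True meaning 1 and False meaning 0.\<close>

type_synonym cell = "nat \<times> nat"
type_synonym sym = "bool \<times> cell option \<times> cell option \<times> cell option"

definition grid :: "nat \<Rightarrow> nat \<Rightarrow> cell set" where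
  "grid n m = {1..n} \<times> {1..m}"

definition val :: "sym \<Rightarrow> bool" where "val s = fst s"
definition lpoint :: "sym \<Rightarrow> cell option" where "lpoint s = fst (snd s)"
definition rpoint :: "sym \<Rightarrow> cell option" where "rpoint s = fst (snd (snd s))"
definition ipoint :: "sym \<Rightarrow> cell option" where "ipoint s = snd (snd (snd s))"

definition ptrs :: "nat \<Rightarrow> nat \<Rightarrow> cell option set" where
  "ptrs n m = {None} \<union> Some ` grid n m"

definition Sigma_alph :: "nat \<Rightarrow> nat \<Rightarrow> sym set" where
  "Sigma_alph n m = UNIV \<times> ptrs n m \<times> ptrs n m \<times> ptrs n m"

text \<open>Inputs x in Sigma^M, represented as total functions on cells that are
  constant (a dummy value) outside the grid.\<close>
definition inputs :: "nat \<Rightarrow> nat \<Rightarrow> (cell \<Rightarrow> sym) set" where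
  "inputs n m = {x. (\<forall>c\<in>grid n m. x c \<in> Sigma_alph n m) \<and>
                    (\<forall>c. c \<notin> grid n m \<longrightarrow> x c = (False, None, None, None))}"

fun tlog :: "nat \<Rightarrow> nat" where
  "tlog m = (if m < 2 then 0 else Suc (tlog (m div 2)))"

text \<open>bits l v: the l-bit binary representation of v, most significant bit first
  (False = 'left', True = 'right').\<close>
fun bits :: "nat \<Rightarrow> nat \<Rightarrow> bool list" where
  "bits 0 v = []"
| "bits (Suc l) v = bits l (v div 2) @ [odd v]"

text \<open>T(j): labels on the root-to-leaf-j path (leaves numbered 1..m left to right).
  With r = floor(log2 m) and e = m - 2^r, the e leftmost leaves of the complete tree
  of depth r get two children, so the first 2e leaves are at depth r+1 and the
  remaining ones at depth r.\<close>
definition Tpath :: "nat \<Rightarrow> nat \<Rightarrow> bool list" where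
  "Tpath m j = (let r = tlog m; e = m - 2 ^ r in
                if j \<le> 2 * e then bits (Suc r) (j - 1) else bits r (j - 1 - e))"

fun follow :: "(cell \<Rightarrow> sym) \<Rightarrow> cell \<Rightarrow> bool list \<Rightarrow> cell option" where
  "follow x c [] = Some c"
| "follow x c (b # bs) =
     (case (if b then rpoint (x c) else lpoint (x c)) of
        None \<Rightarrow> None
      | Some c' \<Rightarrow> follow x c' bs)"

definition blank :: sym where "blank = (True, None, None, None)"

definition marked_cols :: "nat \<Rightarrow> nat \<Rightarrow> (cell \<Rightarrow> sym) \<Rightarrow> nat set" where
  "marked_cols n m x = {j\<in>{1..m}. \<forall>i\<in>{1..n}. val (x (i, j))}"

definition h :: "nat \<Rightarrow> nat \<Rightarrow> nat \<Rightarrow> (cell \<Rightarrow> sym) \<Rightarrow> bool" where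
  "h k n m x = (let B = marked_cols n m x in
     card B = k \<and>
     (\<exists>b a :: nat \<Rightarrow> nat.
        bij_betw b {1..k} B \<and>
        (\<forall>s\<in>{1..k}. a s \<in> {1..n} \<and> x (a s, b s) \<noteq> blank \<and>
                     (\<forall>i\<in>{1..n}. i \<noteq> a s \<longrightarrow> x (i, b s) = blank)) \<and>
        (\<forall>s\<in>{1..k}. s < k \<longrightarrow> ipoint (x (a s, b s)) = Some (a (Suc s), b (Suc s))) \<and>
        ipoint (x (a k, b k)) = Some (a 1, b 1) \<and>
        (\<forall>s\<in>{1..k}. \<forall>t\<in>{1..k}.
            lpoint (x (a s, b s)) = lpoint (x (a t, b t)) \<and>
            rpoint (x (a s, b s)) = rpoint (x (a t, b t))) \<and>
        (\<forall>j\<in>{1..m} - B. \<exists>l. follow x (a 1, b 1) (Tpath m j) = Some l \<and>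
                              snd l = j \<and> \<not> val (x l))))"

datatype dtree = Leaf bool | Query cell "sym \<Rightarrow> dtree"

primrec eval :: "dtree \<Rightarrow> (cell \<Rightarrow> sym) \<Rightarrow> bool" where
  "eval (Leaf b) x = b"
| "eval (Query c f) x = eval (f (x c)) x"

primrec cost :: "dtree \<Rightarrow> (cell \<Rightarrow> sym) \<Rightarrow> nat" where
  "cost (Leaf b) x = 0"
| "cost (Query c f) x = Suc (cost (f (x c)) x)"

definition R0 :: "(cell \<Rightarrow> sym) set \<Rightarrow> ((cell \<Rightarrow> sym) \<Rightarrow> bool) \<Rightarrow> ennreal" where
  "R0 D f = (INF \<mu> \<in> {\<mu> :: dtree pmf. \<forall>T\<in>set_pmf \<mu>. \<forall>x\<in>D. eval T x = f x}.
               SUP x\<in>D. \<integral>\<^sup>+ T. ennreal (real (cost T x)) \<partial>(measure_pmf \<mu>))"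

end

theory Submission
  imports Defs
begin


primrec qset :: "dtree \<Rightarrow> (cell \<Rightarrow> sym) \<Rightarrow> cell set" where
  "qset (Leaf b) x = {}"
| "qset (Query c f) x = insert c (qset (f (x c)) x)"

lemma qset_agree:
  "(\<forall>c\<in>qset T x. y c = x c) \<Longrightarrow> eval T y = eval T x"
  by (induction T) auto

lemma finite_qset: "finite (qset T x)"
  by (induction T) auto

lemma card_qset: "card (qset T x) \<le> cost T x"
proof (induction T)
  case (Query c f)
  have "card (qset (f (x c)) x) \<le> cost (f (x c)) x" using Query.IH[OF rangeI] .
  then show ?case using finite_qset by (simp add: card_insert_if)
qed simp

lemma needle:
  fixes b :: "cell \<Rightarrow> sym" and v :: "cell \<Rightarrow> sym"
  assumes "finite P"
  shows "card {p\<in>P. p \<in> qset T (b(p := v p))} * (card {p\<in>P. p \<in> qset T (b(p := v p))} + 1)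
         \<le> 2 * (\<Sum>p\<in>P. card (qset T (b(p := v p)) \<inter> P))"
  using assms
proof (induction T arbitrary: P)
  case (Leaf x)
  then show ?case by simp
next
  case (Query c f)
  show ?case
  proof (cases "c \<in> P")
    case False
    have eq: "\<And>p. p \<in> P \<Longrightarrow> (b(p := v p)) c = b c" using False by auto
    have e1: "{p\<in>P. p \<in> qset (Query c f) (b(p := v p))} = {p\<in>P. p \<in> qset (f (b c)) (b(p := v p))}"
      using eq False by auto
    have e2: "(\<Sum>p\<in>P. card (qset (Query c f) (b(p := v p)) \<inter> P)) =
                   (\<Sum>p\<in>P. card (qset (f (b c)) (b(p := v p)) \<inter> P))"
      by (rule sum.cong) (use eq False in auto)
    show ?thesis unfolding e1 e2 by (rule Query.IH[OF rangeI[where x="b c"] Query.prems])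
  next
    case True
    define P' where "P' = P - {c}"
    define R' where "R' = {p\<in>P'. p \<in> qset (f (b c)) (b(p := v p))}"
    have fP': "finite P'" using Query.prems P'_def by simp
    have IH: "card R' * (card R' + 1) \<le> 2 * (\<Sum>p\<in>P'. card (qset (f (b c)) (b(p := v p)) \<inter> P'))"
      unfolding R'_def by (rule Query.IH[OF rangeI[where x="b c"] fP'])
    have eq: "\<And>p. p \<in> P' \<Longrightarrow> (b(p := v p)) c = b c" using P'_def by auto
    have R: "{p\<in>P. p \<in> qset (Query c f) (b(p := v p))} = insert c R'"
      using eq True unfolding R'_def P'_def by auto
    have cR: "card (insert c R') = Suc (card R')"
      using fP' R'_def P'_def by (simp add: card_insert_if)
    have R'le: "card R' \<le> card P'" using fP' R'_def by (simp add: card_mono)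
    have trm: "\<And>p. p \<in> P' \<Longrightarrow> card (qset (Query c f) (b(p := v p)) \<inter> P) =
                   Suc (card (qset (f (b c)) (b(p := v p)) \<inter> P'))"
    proof -
      fix p assume p: "p \<in> P'"
      have "qset (Query c f) (b(p := v p)) \<inter> P = insert c (qset (f (b c)) (b(p := v p)) \<inter> P')"
        using eq[OF p] True P'_def by auto
      moreover have "c \<notin> qset (f (b c)) (b(p := v p)) \<inter> P'" using P'_def by auto
      moreover have "finite (qset (f (b c)) (b(p := v p)) \<inter> P')" using fP' by simp
      ultimately show "card (qset (Query c f) (b(p := v p)) \<inter> P) =
                   Suc (card (qset (f (b c)) (b(p := v p)) \<inter> P'))" by simp
    qed
    have c1: "1 \<le> card (qset (Query c f) (b(c := v c)) \<inter> P)"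
    proof -
      have "c \<in> qset (Query c f) (b(c := v c)) \<inter> P" using True by simp
      then show ?thesis using Query.prems by (metis Int_iff One_nat_def Suc_leI card_gt_0_iff empty_iff finite_Int)
    qed
    have "(\<Sum>p\<in>P. card (qset (Query c f) (b(p := v p)) \<inter> P)) =
          card (qset (Query c f) (b(c := v c)) \<inter> P) + (\<Sum>p\<in>P'. card (qset (Query c f) (b(p := v p)) \<inter> P))"
      using True Query.prems P'_def by (simp only: sum.remove)
    also have "(\<Sum>p\<in>P'. card (qset (Query c f) (b(p := v p)) \<inter> P)) =
               (\<Sum>p\<in>P'. Suc (card (qset (f (b c)) (b(p := v p)) \<inter> P')))"
      using trm by (intro sum.cong) (simp_all only:)
    also have "\<dots> = card P' + (\<Sum>p\<in>P'. card (qset (f (b c)) (b(p := v p)) \<inter> P'))"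
      unfolding Suc_eq_plus1 sum.distrib by (simp add: add.commute)
    finally have S: "(\<Sum>p\<in>P. card (qset (Query c f) (b(p := v p)) \<inter> P)) =
        card (qset (Query c f) (b(c := v c)) \<inter> P) + card P' + (\<Sum>p\<in>P'. card (qset (f (b c)) (b(p := v p)) \<inter> P'))"
      by (simp only: add.assoc)
    show ?thesis unfolding R cR S using IH R'le c1 by (simp add: algebra_simps)
  qed
qed



declare tlog.simps[simp del]

lemma length_bits[simp]: "length (bits l v) = l"
  by (induction l arbitrary: v) auto

lemma bits_inj: "v < 2^l \<Longrightarrow> w < 2^l \<Longrightarrow> bits l v = bits l w \<Longrightarrow> v = w"
proof (induction l arbitrary: v w)
  case 0 then show ?case by simp
next
  case (Suc l)
  have "bits l (v div 2) = bits l (w div 2)" and "odd v = odd w"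
    using Suc.prems(3) by auto
  moreover have "v div 2 < 2^l" "w div 2 < 2^l" using Suc.prems by auto
  ultimately have "v div 2 = w div 2" using Suc.IH by blast
  with \<open>odd v = odd w\<close> show ?case by (metis dvd_mult_div_cancel odd_two_times_div_two_succ)
qed

lemma take_bits: "take l (bits (Suc l) v) = bits l (v div 2)"
  by simp

lemma tlog_bounds: "1 \<le> m \<Longrightarrow> 2 ^ tlog m \<le> m \<and> m < 2 ^ Suc (tlog m)"
proof (induction m rule: tlog.induct)
  case (1 m)
  show ?case
  proof (cases "m < 2")
    case True then show ?thesis using 1(2) tlog.simps[of m] by simp
  next
    case False
    then have "1 \<le> m div 2" by simp
    then have IH: "2 ^ tlog (m div 2) \<le> m div 2 \<and> m div 2 < 2 ^ Suc (tlog (m div 2))"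
      using 1(1) False by simp
    have t: "tlog m = Suc (tlog (m div 2))" using False tlog.simps[of m] by simp
    show ?thesis unfolding t using IH by auto
  qed
qed

lemma tlog_pos: "2 \<le> m \<Longrightarrow> 1 \<le> tlog m"
  using tlog.simps[of m] by simp

lemma Tpath_facts:
  assumes m: "2 \<le> m" and j: "j \<in> {1..m}"
  shows "1 \<le> length (Tpath m j) \<and> length (Tpath m j) \<le> Suc (tlog m)"
proof -
  have "1 \<le> tlog m" using m by (rule tlog_pos)
  then show ?thesis unfolding Tpath_def Let_def by auto
qed

lemma Tpath_inj:
  assumes m: "2 \<le> m" and j: "j \<in> {1..m}" and j': "j' \<in> {1..m}"
    and eq: "Tpath m j = Tpath m j'"
  shows "j = j'"
proof -
  define r where "r = tlog m"
  define e where "e = m - 2 ^ r"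
  have bnd: "2 ^ r \<le> m" "m < 2 ^ Suc r" using tlog_bounds[of m] m r_def by auto
  have T: "\<And>i. Tpath m i = (if i \<le> 2 * e then bits (Suc r) (i - 1) else bits r (i - 1 - e))"
    unfolding Tpath_def r_def e_def Let_def by simp
  show ?thesis
  proof (cases "j \<le> 2 * e")
    case True
    show ?thesis
    proof (cases "j' \<le> 2*e")
      case True2: True
      have "bits (Suc r) (j - 1) = bits (Suc r) (j' - 1)" using eq T True True2 by simp
      moreover have "j - 1 < 2 ^ Suc r" "j' - 1 < 2 ^ Suc r" using j j' bnd by auto
      ultimately have "j - 1 = j' - 1" using bits_inj by blast
      then show ?thesis using j j' by arith
    next
      case False
      have "length (Tpath m j) = Suc r" "length (Tpath m j') = r" using T True False by auto
      then show ?thesis using eq by simp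
    qed
  next
    case False
    show ?thesis
    proof (cases "j' \<le> 2*e")
      case True2: True
      have "length (Tpath m j) = r" "length (Tpath m j') = Suc r" using T True2 False by auto
      then show ?thesis using eq by simp
    next
      case False2: False
      have "bits r (j - 1 - e) = bits r (j' - 1 - e)" using eq T False False2 by simp
      moreover have "j - 1 - e < 2 ^ r" "j' - 1 - e < 2 ^ r" using j j' bnd e_def by auto
      ultimately have "j - 1 - e = j' - 1 - e" using bits_inj by blast
      then show ?thesis using j j' False False2 by simp
    qed
  qed
qed

lemma Tpath_prefix_free:
  assumes m: "2 \<le> m" and j: "j \<in> {1..m}" and j': "j' \<in> {1..m}"
    and i: "i < length (Tpath m j)" and eq: "take i (Tpath m j) = Tpath m j'"
  shows False
proof -
  define r where "r = tlog m"
  define e where "e = m - 2 ^ r"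
  have bnd: "2 ^ r \<le> m" "m < 2 ^ Suc r" using tlog_bounds[of m] m r_def by auto
  have T: "\<And>i. Tpath m i = (if i \<le> 2 * e then bits (Suc r) (i - 1) else bits r (i - 1 - e))"
    unfolding Tpath_def r_def e_def Let_def by simp
  have "length (take i (Tpath m j)) = i" using i by simp
  then have li: "length (Tpath m j') = i" unfolding eq .
  have lj: "\<And>i. length (Tpath m i) = (if i \<le> 2 * e then Suc r else r)" using T by simp
  have jle: "j \<le> 2 * e" and j'gt: "\<not> j' \<le> 2 * e" and ir: "i = r"
    using lj[of j] lj[of j'] li i by (auto split: if_splits)
  have "take r (bits (Suc r) (j - 1)) = bits r (j' - 1 - e)"
    using eq T jle j'gt ir by simp
  then have "bits r ((j - 1) div 2) = bits r (j' - 1 - e)" by simp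
  moreover have "(j - 1) div 2 < e" using jle j by auto
  moreover have "e < 2 ^ r" using bnd e_def by auto
  moreover have "j' - 1 - e < 2 ^ r" using j' bnd e_def by auto
  ultimately have "(j - 1) div 2 = j' - 1 - e" using bits_inj
    by (metis order.strict_trans)
  moreover have "e \<le> j' - 1 - e" using j'gt by auto
  ultimately show False using \<open>(j - 1) div 2 < e\<close> by simp
qed



definition zs :: sym where "zs = (False, None, None, None)"

definition zin :: "nat \<Rightarrow> nat \<Rightarrow> (nat \<Rightarrow> nat) \<Rightarrow> cell \<Rightarrow> sym" where
  "zin n m \<sigma> c = (if c \<in> grid n m then (if fst c = \<sigma> (snd c) then zs else blank) else zs)"

lemma zin_inputs:
  assumes "\<sigma> \<in> PiE {1..m} (\<lambda>_. {1..n})"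
  shows "zin n m \<sigma> \<in> inputs n m"
  unfolding inputs_def zin_def Sigma_alph_def ptrs_def zs_def blank_def by auto

lemma zin_h:
  assumes "\<sigma> \<in> PiE {1..m} (\<lambda>_. {1..n})" and "1 \<le> k"
  shows "\<not> h k n m (zin n m \<sigma>)"
proof -
  have "marked_cols n m (zin n m \<sigma>) = {}"
  proof (rule ccontr)
    assume "marked_cols n m (zin n m \<sigma>) \<noteq> {}"
    then obtain j where j: "j \<in> {1..m}" "\<forall>i\<in>{1..n}. val (zin n m \<sigma> (i, j))"
      unfolding marked_cols_def by auto
    have "\<sigma> j \<in> {1..n}" using assms(1) j(1) by auto
    then have "val (zin n m \<sigma> (\<sigma> j, j))" using j by auto
    moreover have "(\<sigma> j, j) \<in> grid n m" using \<open>\<sigma> j \<in> {1..n}\<close> j(1) unfolding grid_def by auto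
    ultimately show False unfolding zin_def zs_def val_def by simp
  qed
  then show ?thesis using assms(2) unfolding h_def Let_def by simp
qed

lemma follow_gen:
  assumes "\<forall>i<length p. (if p!i then rpoint (x (g (take i p))) else lpoint (x (g (take i p))))
                          = Some (g (take (Suc i) p))"
  shows "i0 \<le> length p \<Longrightarrow> follow x (g (take i0 p)) (drop i0 p) = Some (g p)"
proof (induction "length p - i0" arbitrary: i0)
  case 0
  then show ?case by simp
next
  case (Suc d)
  then have i0: "i0 < length p" by simp
  have dr: "drop i0 p = p ! i0 # drop (Suc i0) p" using i0 by (simp add: Cons_nth_drop_Suc)
  have IH: "follow x (g (take (Suc i0) p)) (drop (Suc i0) p) = Some (g p)"
    using Suc.hyps(1)[of "Suc i0"] Suc.hyps(2) i0 by simp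
  show ?case unfolding dr using assms i0 IH by (auto split: option.splits)
qed

lemma geom_le: "(\<Sum>i\<le>r. (2::nat) ^ i) < 2 ^ Suc r"
  by (induction r) auto



lemma completion:
  assumes n8: "8 \<le> n" and m3: "3 \<le> m" and k1: "1 \<le> k" and km: "2 * k < m"
    and sig: "\<sigma> \<in> PiE {1..m} (\<lambda>_. {1..n})"
    and corr: "\<forall>x\<in>inputs n m. eval T x = h k n m x"
    and cst: "8 * cost T (zin n m \<sigma>) < n * m"
  shows "card {j\<in>{1..m}. (\<sigma> j, j) \<notin> qset T (zin n m \<sigma>)} < k"
proof (rule ccontr)
  define z where "z = zin n m \<sigma>"
  define Q where "Q = qset T z"
  define U where "U = {j\<in>{1..m}. (\<sigma> j, j) \<notin> Q}"
  assume "\<not> card {j\<in>{1..m}. (\<sigma> j, j) \<notin> qset T (zin n m \<sigma>)} < k"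
  then have kU: "k \<le> card U" unfolding U_def Q_def z_def by simp
  obtain Bm where BmU: "Bm \<subseteq> U" and cBm: "card Bm = k" and fBm: "finite Bm"
    using obtain_subset_with_card_n[OF kU] by blast
  obtain b where bij: "bij_betw b {1..k} Bm"
    using ex_bij_betw_nat_finite_1[OF fBm] cBm by auto
  have Bm1: "Bm \<subseteq> {1..m}" using BmU U_def by auto
  have BmQ: "\<And>j. j \<in> Bm \<Longrightarrow> (\<sigma> j, j) \<notin> Q" using BmU U_def by auto
  have sigr: "\<And>j. j \<in> {1..m} \<Longrightarrow> \<sigma> j \<in> {1..n}" using sig by auto
  define a where "a s = \<sigma> (b s)" for s
  define r where "r = tlog m"
  have bnd: "2 ^ r \<le> m" "m < 2 ^ Suc r" using tlog_bounds[of m] m3 r_def by auto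
  define W where "W = {u::bool list. 1 \<le> length u \<and> length u \<le> r}"
  have WL: "W \<subseteq> {xs. set xs \<subseteq> (UNIV::bool set) \<and> length xs \<le> r}" unfolding W_def by auto
  have fL: "finite {xs. set xs \<subseteq> (UNIV::bool set) \<and> length xs \<le> r}"
    using finite_lists_length_le[of "UNIV::bool set" r] by simp
  have fW: "finite W" using WL fL finite_subset by blast
  have cW: "card W \<le> 2 * m"
  proof -
    have "card W \<le> card {xs. set xs \<subseteq> (UNIV::bool set) \<and> length xs \<le> r}"
      using WL fL card_mono by blast
    also have "\<dots> = (\<Sum>i\<le>r. 2 ^ i)" using card_lists_length_le[of "UNIV::bool set" r] by simp
    also have "\<dots> < 2 ^ Suc r" by (rule geom_le)
    finally show ?thesis using bnd by simp
  qed
  define A where "A = {c \<in> grid n m. c \<notin> Q \<and> snd c \<notin> Bm \<and> fst c \<noteq> \<sigma> (snd c)}"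
  define G' where "G' = Sigma ({1..m} - Bm) (\<lambda>j. {1..n} - {\<sigma> j})"
  have AG: "A = prod.swap ` G' - Q" unfolding A_def G'_def grid_def by force
  have cG0: "card G' = (m - k) * (n - 1)"
  proof -
    have "card G' = (\<Sum>j\<in>{1..m} - Bm. card ({1..n} - {\<sigma> j}))"
      unfolding G'_def by (simp add: card_SigmaI)
    also have "\<dots> = (\<Sum>j\<in>{1..m} - Bm. n - 1)"
      by (rule sum.cong) (use sigr in auto)
    also have "\<dots> = (m - k) * (n - 1)" using cBm Bm1 fBm by (simp add: card_Diff_subset)
    finally show ?thesis .
  qed
  have cG: "card (prod.swap ` G') = (m - k) * (n - 1)"
    using cG0 by (simp add: card_image)
  have fQ: "finite Q" unfolding Q_def by (rule finite_qset)
  have cQ: "card Q \<le> cost T z" unfolding Q_def by (rule card_qset)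
  have cA: "card (prod.swap ` G') - card Q \<le> card A" unfolding AG using fQ by (rule diff_card_le_card_Diff)
  have arith: "2 * m + cost T z \<le> (m - k) * (n - 1)"
  proof -
    have c8: "8 * cost T z < n * m" using cst z_def by simp
    have mk: "m + 1 \<le> 2 * (m - k)" using km by simp
    have "4 * (m + 1) * (n - 1) \<le> 4 * (2 * (m - k)) * (n - 1)" using mk
      by (intro mult_le_mono1 mult_le_mono2)
    then have "4 * (m + 1) * (n - 1) \<le> 8 * ((m - k) * (n - 1))" by (simp add: mult.assoc)
    moreover have "16 * m + 8 * cost T z \<le> 4 * (m + 1) * (n - 1)"
    proof -
      have "n * m + 16 * m \<le> 4 * (m + 1) * (n - 1)"
      proof -
        obtain q where q: "n = q + 8" using n8 by (metis le_add_diff_inverse2)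
        show ?thesis unfolding q by (simp add: algebra_simps)
      qed
      then show ?thesis using c8 by linarith
    qed
    ultimately show ?thesis by linarith
  qed
  have fA: "finite A" unfolding A_def grid_def by simp
  have WA: "card W \<le> card A" using cW cA cQ arith cG by linarith
  obtain \<iota> where \<iota>A: "\<iota> ` W \<subseteq> A" and \<iota>inj: "inj_on \<iota> W"
    using card_le_inj[OF fW fA WA] by blast
  define UM where "UM = {1..m} - Bm"
  define isleaf where "isleaf u = (\<exists>j\<in>UM. Tpath m j = u)" for u
  define lf where "lf u = (SOME j. j \<in> UM \<and> Tpath m j = u)" for u
  define \<nu> where "\<nu> u = (if isleaf u then (\<sigma> (lf u), lf u) else if u = [] then (a 1, b 1)
                          else if u \<in> W then \<iota> u else (a 1, b 1))" for u
  define SP where "SP = (\<lambda>j. (\<sigma> j, j)) ` Bm"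
  define nx where "nx j = (let s = inv_into {1..k} b j in
                     if s < k then (a (Suc s), b (Suc s)) else (a 1, b 1))" for j
  define y where "y c = (if c \<in> SP then (True, Some (\<nu> [False]), Some (\<nu> [True]), Some (nx (snd c)))
      else if c \<in> \<iota> ` W then (False, Some (\<nu> (inv_into W \<iota> c @ [False])),
                             Some (\<nu> (inv_into W \<iota> c @ [True])), None)
      else z c)" for c
  have m2: "2 \<le> m" using m3 by simp
  have bk: "\<And>s. s \<in> {1..k} \<Longrightarrow> b s \<in> Bm" by (rule bij_betw_apply[OF bij])
  have b1: "b 1 \<in> Bm" using bk k1 by simp
  have ingrid: "\<And>j. j \<in> {1..m} \<Longrightarrow> (\<sigma> j, j) \<in> grid n m" using sigr unfolding grid_def by auto
  have lf: "\<And>j. j \<in> UM \<Longrightarrow> lf (Tpath m j) = j"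
  proof -
    fix j assume j: "j \<in> UM"
    have "lf (Tpath m j) \<in> UM \<and> Tpath m (lf (Tpath m j)) = Tpath m j"
      unfolding lf_def by (rule someI[of _ j]) (use j in simp)
    then show "lf (Tpath m j) = j" using Tpath_inj[OF m2] j UM_def by blast
  qed
  have A_grid: "A \<subseteq> grid n m" unfolding A_def by auto
  have \<nu>grid: "\<And>u. \<nu> u \<in> grid n m"
  proof -
    fix u
    show "\<nu> u \<in> grid n m"
    proof (cases "isleaf u")
      case True
      then obtain j where j: "j \<in> UM" "Tpath m j = u" unfolding isleaf_def by blast
      then show ?thesis using lf[OF j(1)] ingrid UM_def \<nu>_def True by auto
    next
      case False
      have r1: "(a 1, b 1) \<in> grid n m" using ingrid b1 Bm1 a_def by auto
      show ?thesis using False r1 \<iota>A A_grid unfolding \<nu>_def by auto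
    qed
  qed
  have nxgrid: "\<And>j. nx j \<in> grid n m"
  proof -
    fix j
    have "\<And>s. s \<in> {1..k} \<Longrightarrow> (a s, b s) \<in> grid n m"
    proof -
      fix s assume "s \<in> {1..k}"
      then have "b s \<in> {1..m}" using bk Bm1 by blast
      then show "(a s, b s) \<in> grid n m" using ingrid a_def by simp
    qed
    moreover have "\<And>s. s < k \<Longrightarrow> Suc s \<in> {1..k}" by simp
    ultimately show "nx j \<in> grid n m" unfolding nx_def Let_def using k1 by auto
  qed
  have SPgrid: "SP \<subseteq> grid n m" unfolding SP_def using ingrid Bm1 by auto
  have yin: "y \<in> inputs n m"
  proof -
    have "\<forall>c\<in>grid n m. y c \<in> Sigma_alph n m"
    proof
      fix c assume c: "c \<in> grid n m"
      have "z c \<in> Sigma_alph n m" using zin_inputs[OF sig] c unfolding inputs_def z_def by auto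
      then show "y c \<in> Sigma_alph n m"
        unfolding y_def Sigma_alph_def ptrs_def using \<nu>grid nxgrid by auto
    qed
    moreover have "\<forall>c. c \<notin> grid n m \<longrightarrow> y c = (False, None, None, None)"
    proof (intro allI impI)
      fix c assume c: "c \<notin> grid n m"
      then have "c \<notin> SP" "c \<notin> \<iota> ` W" using SPgrid \<iota>A A_grid by auto
      then show "y c = (False, None, None, None)"
        using c unfolding z_def y_def zin_def zs_def by simp
    qed
    ultimately show ?thesis unfolding inputs_def by blast
  qed
  have yQ: "\<forall>c\<in>Q. y c = z c"
  proof
    fix c assume c: "c \<in> Q"
    have "c \<notin> SP" using c BmQ unfolding SP_def by auto
    moreover have "c \<notin> \<iota> ` W" using c \<iota>A unfolding A_def by auto
    ultimately show "y c = z c" unfolding y_def by simp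
  qed
  have "eval T y = eval T z" using qset_agree yQ Q_def by blast
  then have hy: "\<not> h k n m y" using corr yin zin_inputs[OF sig] zin_h[OF sig k1] z_def by metis
  have SPcol: "\<And>c. c \<in> SP \<Longrightarrow> snd c \<in> Bm \<and> fst c = \<sigma> (snd c)" unfolding SP_def by auto
  have Acol: "\<And>c. c \<in> \<iota> ` W \<Longrightarrow> snd c \<notin> Bm \<and> fst c \<noteq> \<sigma> (snd c) \<and> c \<in> grid n m"
    using \<iota>A unfolding A_def by auto
  have binj: "inj_on b {1..k}" using bij bij_betw_def by blast
  have ya: "\<And>s. s \<in> {1..k} \<Longrightarrow> y (a s, b s) = (True, Some (\<nu> [False]), Some (\<nu> [True]), Some (nx (b s)))"
  proof -
    fix s assume s: "s \<in> {1..k}"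
    have "(a s, b s) \<in> SP" unfolding SP_def a_def using bk[OF s] by auto
    then show "y (a s, b s) = (True, Some (\<nu> [False]), Some (\<nu> [True]), Some (nx (b s)))"
      unfolding y_def by simp
  qed
  have yblank: "\<And>i j. j \<in> Bm \<Longrightarrow> i \<in> {1..n} \<Longrightarrow> i \<noteq> \<sigma> j \<Longrightarrow> y (i, j) = blank"
  proof -
    fix i j assume j: "j \<in> Bm" and i: "i \<in> {1..n}" and ij: "i \<noteq> \<sigma> j"
    have "(i, j) \<notin> SP" using SPcol ij by fastforce
    moreover have "(i, j) \<notin> \<iota> ` W" using Acol j by fastforce
    moreover have "(i, j) \<in> grid n m" using i j Bm1 unfolding grid_def by auto
    ultimately show "y (i, j) = blank" unfolding y_def z_def zin_def using ij by simp
  qed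
  have yzero: "\<And>j. j \<in> UM \<Longrightarrow> y (\<sigma> j, j) = zs"
  proof -
    fix j assume j: "j \<in> UM"
    have "(\<sigma> j, j) \<notin> SP" using SPcol j UM_def by fastforce
    moreover have "(\<sigma> j, j) \<notin> \<iota> ` W" using Acol by fastforce
    ultimately show "y (\<sigma> j, j) = zs" unfolding y_def z_def zin_def by simp
  qed
  have marked: "marked_cols n m y = Bm"
  proof
    show "marked_cols n m y \<subseteq> Bm"
    proof
      fix j assume "j \<in> marked_cols n m y"
      then have j: "j \<in> {1..m}" "\<forall>i\<in>{1..n}. val (y (i, j))" unfolding marked_cols_def by auto
      show "j \<in> Bm"
      proof (rule ccontr)
        assume "j \<notin> Bm"
        then have "j \<in> UM" using j UM_def by simp
        then have "y (\<sigma> j, j) = zs" by (rule yzero)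
        moreover have "\<sigma> j \<in> {1..n}" using sigr j by simp
        ultimately show False using j unfolding zs_def val_def by force
      qed
    qed
  next
    show "Bm \<subseteq> marked_cols n m y"
    proof
      fix j assume j: "j \<in> Bm"
      have "\<forall>i\<in>{1..n}. val (y (i, j))"
      proof
        fix i assume i: "i \<in> {1..n}"
        show "val (y (i, j))"
        proof (cases "i = \<sigma> j")
          case True
          have "(i, j) \<in> SP" unfolding SP_def using True j by auto
          then show ?thesis unfolding y_def val_def by simp
        next
          case False
          then show ?thesis using yblank[OF j i] unfolding blank_def val_def by simp
        qed
      qed
      then show "j \<in> marked_cols n m y" using j Bm1 unfolding marked_cols_def by auto
    qed
  qed
  have Tl: "\<And>j. j \<in> {1..m} \<Longrightarrow> 1 \<le> length (Tpath m j) \<and> length (Tpath m j) \<le> Suc r"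
    using Tpath_facts[OF m2] r_def by blast
  have nu0: "\<nu> [] = (a 1, b 1)"
  proof -
    have "\<not> isleaf []" unfolding isleaf_def UM_def using Tl by fastforce
    then show ?thesis unfolding \<nu>_def by simp
  qed
  have nuleaf: "\<And>j. j \<in> UM \<Longrightarrow> \<nu> (Tpath m j) = (\<sigma> j, j)"
  proof -
    fix j assume j: "j \<in> UM"
    have "isleaf (Tpath m j)" unfolding isleaf_def using j by blast
    then show "\<nu> (Tpath m j) = (\<sigma> j, j)" unfolding \<nu>_def using lf[OF j] by simp
  qed
  have follow_ok: "\<And>j. j \<in> UM \<Longrightarrow> follow y (a 1, b 1) (Tpath m j) = Some (\<sigma> j, j)"
  proof -
    fix j assume j: "j \<in> UM"
    define p where "p = Tpath m j"
    have j1: "j \<in> {1..m}" using j UM_def by simp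
    have stp: "\<forall>i<length p. (if p!i then rpoint (y (\<nu> (take i p))) else lpoint (y (\<nu> (take i p))))
                          = Some (\<nu> (take (Suc i) p))"
    proof (intro allI impI)
      fix i assume i: "i < length p"
      have tS: "take (Suc i) p = take i p @ [p ! i]" using i by (simp add: take_Suc_conv_app_nth)
      show "(if p!i then rpoint (y (\<nu> (take i p))) else lpoint (y (\<nu> (take i p))))
                          = Some (\<nu> (take (Suc i) p))"
      proof (cases "i = 0")
        case True
        have "y (\<nu> []) = (True, Some (\<nu> [False]), Some (\<nu> [True]), Some (nx (b 1)))"
          unfolding nu0 a_def[symmetric] using ya[of 1] k1 by simp
        then show ?thesis using True tS unfolding rpoint_def lpoint_def by simp
      next
        case False
        define u where "u = take i p"
        have lu: "length u = i" using i u_def by simp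
        have uW: "u \<in> W" using lu False i Tl[OF j1] unfolding W_def p_def by simp
        have nl: "\<not> isleaf u"
        proof
          assume "isleaf u"
          then obtain j' where j': "j' \<in> UM" "Tpath m j' = u" unfolding isleaf_def by blast
          show False using Tpath_prefix_free[OF m2 j1, of j' i] j' i u_def p_def UM_def by simp
        qed
        have nuu: "\<nu> u = \<iota> u" unfolding \<nu>_def using nl uW lu False by auto
        have inW: "\<iota> u \<in> \<iota> ` W" using uW by simp
        have nSP: "\<iota> u \<notin> SP" using Acol[OF inW] SPcol by blast
        have iv: "inv_into W \<iota> (\<iota> u) = u" using \<iota>inj uW by (simp add: inv_into_f_f)
        have "y (\<iota> u) = (False, Some (\<nu> (u @ [False])), Some (\<nu> (u @ [True])), None)"
          unfolding y_def using inW nSP iv by simp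
        then show ?thesis unfolding u_def[symmetric] tS nuu[symmetric] rpoint_def lpoint_def by simp
      qed
    qed
    have "follow y (\<nu> (take 0 p)) (drop 0 p) = Some (\<nu> p)"
      by (rule follow_gen[OF stp]) simp
    then show "follow y (a 1, b 1) (Tpath m j) = Some (\<sigma> j, j)"
      using nu0 nuleaf[OF j] p_def by simp
  qed
  have "h k n m y"
    unfolding h_def Let_def marked
  proof (intro conjI exI)
    show "card Bm = k" by (rule cBm)
    show "bij_betw b {1..k} Bm" by (rule bij)
    show "\<forall>s\<in>{1..k}. a s \<in> {1..n} \<and> y (a s, b s) \<noteq> blank \<and>
           (\<forall>i\<in>{1..n}. i \<noteq> a s \<longrightarrow> y (i, b s) = blank)"
    proof
      fix s assume s: "s \<in> {1..k}"
      have bs: "b s \<in> Bm" by (rule bk[OF s])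
      have "a s \<in> {1..n}" unfolding a_def using sigr bs Bm1 by blast
      moreover have "y (a s, b s) \<noteq> blank" using ya[OF s] unfolding blank_def by simp
      moreover have "\<forall>i\<in>{1..n}. i \<noteq> a s \<longrightarrow> y (i, b s) = blank"
        using yblank[OF bs] a_def by simp
      ultimately show "a s \<in> {1..n} \<and> y (a s, b s) \<noteq> blank \<and>
           (\<forall>i\<in>{1..n}. i \<noteq> a s \<longrightarrow> y (i, b s) = blank)" by blast
    qed
    show "\<forall>s\<in>{1..k}. s < k \<longrightarrow> ipoint (y (a s, b s)) = Some (a (Suc s), b (Suc s))"
    proof (intro ballI impI)
      fix s assume s: "s \<in> {1..k}" and sk: "s < k"
      have "inv_into {1..k} b (b s) = s" using binj s by (simp add: inv_into_f_f)
      then show "ipoint (y (a s, b s)) = Some (a (Suc s), b (Suc s))"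
        using ya[OF s] sk unfolding ipoint_def nx_def Let_def by simp
    qed
    show "ipoint (y (a k, b k)) = Some (a 1, b 1)"
    proof -
      have s: "k \<in> {1..k}" using k1 by simp
      have "inv_into {1..k} b (b k) = k" using binj s by (simp add: inv_into_f_f)
      then show ?thesis using ya[OF s] unfolding ipoint_def nx_def Let_def by simp
    qed
    show "\<forall>s\<in>{1..k}. \<forall>t\<in>{1..k}. lpoint (y (a s, b s)) = lpoint (y (a t, b t)) \<and>
            rpoint (y (a s, b s)) = rpoint (y (a t, b t))"
      using ya unfolding lpoint_def rpoint_def by simp
    show "\<forall>j\<in>{1..m} - Bm. \<exists>l. follow y (a 1, b 1) (Tpath m j) = Some l \<and> snd l = j \<and> \<not> val (y l)"
    proof
      fix j assume j: "j \<in> {1..m} - Bm"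
      then have jU: "j \<in> UM" unfolding UM_def .
      show "\<exists>l. follow y (a 1, b 1) (Tpath m j) = Some l \<and> snd l = j \<and> \<not> val (y l)"
        using follow_ok[OF jU] yzero[OF jU] unfolding zs_def val_def by simp
    qed
  qed
  then show False using hy by simp
qed



lemma fiber:
  fixes G :: "(nat \<Rightarrow> nat) \<Rightarrow> real"
  assumes fI: "finite I" and fA: "finite A" and j: "j \<in> I"
  shows "(\<Sum>\<sigma>\<in>PiE I (\<lambda>_. A). \<Sum>r\<in>A. G (\<sigma>(j:=r))) = real (card A) * (\<Sum>\<sigma>\<in>PiE I (\<lambda>_. A). G \<sigma>)"
proof -
  define S where "S = PiE I (\<lambda>_. A)"
  define R where "R \<sigma> \<tau> = (\<forall>i. i \<noteq> j \<longrightarrow> \<tau> i = \<sigma> i)" for \<sigma> \<tau> :: "nat \<Rightarrow> nat"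
  have fS: "finite S" unfolding S_def using fI fA by (simp add: finite_PiE)
  have img: "\<And>\<sigma>. \<sigma> \<in> S \<Longrightarrow> (\<lambda>r. \<sigma>(j:=r)) ` A = {\<tau>\<in>S. R \<sigma> \<tau>}"
  proof -
    fix \<sigma> assume s: "\<sigma> \<in> S"
    show "(\<lambda>r. \<sigma>(j:=r)) ` A = {\<tau>\<in>S. R \<sigma> \<tau>}"
    proof
      show "(\<lambda>r. \<sigma>(j:=r)) ` A \<subseteq> {\<tau>\<in>S. R \<sigma> \<tau>}"
        using s j unfolding S_def R_def by (auto simp: PiE_iff extensional_def)
    next
      show "{\<tau>\<in>S. R \<sigma> \<tau>} \<subseteq> (\<lambda>r. \<sigma>(j:=r)) ` A"
      proof
        fix \<tau> assume t: "\<tau> \<in> {\<tau>\<in>S. R \<sigma> \<tau>}"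
        then have "\<tau> = \<sigma>(j := \<tau> j)" unfolding R_def by auto
        moreover have "\<tau> j \<in> A" using t j unfolding S_def by auto
        ultimately show "\<tau> \<in> (\<lambda>r. \<sigma>(j:=r)) ` A" by blast
      qed
    qed
  qed
  have inj: "\<And>\<sigma>. inj_on (\<lambda>r. \<sigma>(j:=r)) A"
    unfolding inj_on_def by (metis fun_upd_same)
  have cR: "\<And>\<tau>. \<tau> \<in> S \<Longrightarrow> card {\<sigma>\<in>S. R \<sigma> \<tau>} = card A"
  proof -
    fix \<tau> assume t: "\<tau> \<in> S"
    have "{\<sigma>\<in>S. R \<sigma> \<tau>} = {\<sigma>\<in>S. R \<tau> \<sigma>}" unfolding R_def by auto
    also have "\<dots> = (\<lambda>r. \<tau>(j:=r)) ` A" using img[OF t] by simp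
    finally show "card {\<sigma>\<in>S. R \<sigma> \<tau>} = card A" using inj card_image by metis
  qed
  have "(\<Sum>\<sigma>\<in>S. \<Sum>r\<in>A. G (\<sigma>(j:=r))) = (\<Sum>\<sigma>\<in>S. \<Sum>\<tau>\<in>{\<tau>\<in>S. R \<sigma> \<tau>}. G \<tau>)"
  proof (rule sum.cong)
    fix \<sigma> assume s: "\<sigma> \<in> S"
    show "(\<Sum>r\<in>A. G (\<sigma>(j:=r))) = (\<Sum>\<tau>\<in>{\<tau>\<in>S. R \<sigma> \<tau>}. G \<tau>)"
      unfolding img[OF s, symmetric] by (simp add: sum.reindex[OF inj])
  qed simp
  also have "\<dots> = (\<Sum>\<tau>\<in>S. \<Sum>\<sigma>\<in>{\<sigma>\<in>S. R \<sigma> \<tau>}. G \<tau>)"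
    by (rule sum.swap_restrict[OF fS fS])
  also have "\<dots> = (\<Sum>\<tau>\<in>S. real (card A) * G \<tau>)"
    by (rule sum.cong) (simp_all add: cR)
  finally show ?thesis unfolding S_def by (simp add: sum_distrib_left)
qed

lemma indicator_sum_card:
  "finite I \<Longrightarrow> (\<Sum>j\<in>I. if P j then 1 else 0 :: real) = real (card {j\<in>I. P j})"
  by (simp add: sum.If_cases Int_def conj_commute)



lemma col_needle:
  assumes j: "j \<in> {1..m}"
  shows "real n * real (card {r\<in>{1..n}. (r, j) \<in> qset T (zin n m (\<sigma>(j:=r)))}) / 2 - real n ^ 2 / 8
     \<le> (\<Sum>r\<in>{1..n}. real (card (qset T (zin n m (\<sigma>(j:=r))) \<inter> ({1..n} \<times> {j}))))"
proof -
  define b0 where "b0 c = (if snd c = j \<and> c \<in> grid n m then blank else zin n m \<sigma> c)" for c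
  define P where "P = {1..n} \<times> {j}"
  define f where "f = card {r\<in>{1..n}. (r, j) \<in> qset T (zin n m (\<sigma>(j:=r)))}"
  have eqz: "\<And>r. r \<in> {1..n} \<Longrightarrow> zin n m (\<sigma>(j:=r)) = b0((r,j) := zs)"
  proof
    fix r c assume r: "r \<in> {1..n}"
    show "zin n m (\<sigma>(j:=r)) c = (b0((r,j) := zs)) c"
      using r j unfolding zin_def b0_def grid_def by (cases c) auto
  qed
  have Pimg: "P = (\<lambda>r. (r, j)) ` {1..n}" unfolding P_def by auto
  have inj: "inj_on (\<lambda>r. (r, j)) X" for X :: "nat set" unfolding inj_on_def by simp
  have fP: "finite P" unfolding P_def by simp
  note N = needle[OF fP, of T b0 "\<lambda>_. zs"]
  have s1: "(\<Sum>p\<in>P. card (qset T (b0(p := zs)) \<inter> P)) =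
            (\<Sum>r\<in>{1..n}. card (qset T (zin n m (\<sigma>(j:=r))) \<inter> P))"
    unfolding Pimg sum.reindex[OF inj] using eqz by (intro sum.cong) simp_all
  have c1: "{p\<in>P. p \<in> qset T (b0(p := zs))} = (\<lambda>r. (r, j)) ` {r\<in>{1..n}. (r, j) \<in> qset T (zin n m (\<sigma>(j:=r)))}"
    unfolding Pimg using eqz by auto
  have c2: "card {p\<in>P. p \<in> qset T (b0(p := zs))} = f"
    unfolding c1 f_def by (rule card_image[OF inj])
  have key: "f * (f + 1) \<le> 2 * (\<Sum>r\<in>{1..n}. card (qset T (zin n m (\<sigma>(j:=r))) \<inter> P))"
    using N unfolding c2 s1 .
  have key': "real f * (real f + 1) \<le> 2 * (\<Sum>r\<in>{1..n}. real (card (qset T (zin n m (\<sigma>(j:=r))) \<inter> P)))"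
  proof -
    have "real (f * (f + 1)) \<le> real (2 * (\<Sum>r\<in>{1..n}. card (qset T (zin n m (\<sigma>(j:=r))) \<inter> P)))"
      using key by (rule of_nat_mono)
    then show ?thesis by (simp add: algebra_simps)
  qed
  have sq: "0 \<le> (2 * real f - real n) ^ 2" by simp
  have "real n * real f / 2 - real n ^ 2 / 8 \<le> real f * (real f + 1) / 2"
    using sq by (simp add: power2_eq_square algebra_simps)
  then show ?thesis using key' unfolding f_def P_def by simp
qed



lemma cols_le_cost:
  "(\<Sum>j\<in>{1..m}. real (card (qset T x \<inter> ({1..n} \<times> {j})))) \<le> real (cost T x)"
proof -
  have fq: "finite (qset T x)" by (rule finite_qset)
  have "(\<Sum>j\<in>{1..m}. card (qset T x \<inter> ({1..n} \<times> {j}))) = card (\<Union>j\<in>{1..m}. qset T x \<inter> ({1..n} \<times> {j}))"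
    by (rule card_UN_disjoint[symmetric]) (use fq in auto)
  also have "\<dots> \<le> card (qset T x)" by (rule card_mono[OF fq]) auto
  also have "\<dots> \<le> cost T x" by (rule card_qset)
  finally have "(\<Sum>j\<in>{1..m}. card (qset T x \<inter> ({1..n} \<times> {j}))) \<le> cost T x" .
  then have "real (\<Sum>j\<in>{1..m}. card (qset T x \<inter> ({1..n} \<times> {j}))) \<le> real (cost T x)"
    by (rule of_nat_mono)
  then show ?thesis by simp
qed

lemma det_bound:
  assumes n8: "8 \<le> n" and m3: "3 \<le> m" and k1: "1 \<le> k" and km: "2 * k < m"
    and corr: "\<forall>x\<in>inputs n m. eval T x = h k n m x"
  shows "real (card (PiE {1..m} (\<lambda>_. {1..n::nat}))) * (real n * real m) / 24
         \<le> (\<Sum>\<sigma>\<in>PiE {1..m} (\<lambda>_. {1..n}). real (cost T (zin n m \<sigma>)))"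
proof -
  define S where "S = PiE {1..m} (\<lambda>_. {1..n::nat})"
  define C where "C \<sigma> = real (cost T (zin n m \<sigma>))" for \<sigma>
  define cq where "cq j \<sigma> = real (card (qset T (zin n m \<sigma>) \<inter> ({1..n} \<times> {j})))" for j \<sigma>
  define Fi where "Fi j \<sigma> = (if (\<sigma> j, j) \<in> qset T (zin n m \<sigma>) then 1 else 0 :: real)" for j \<sigma>
  have fS: "finite S" unfolding S_def by (simp add: finite_PiE)
  have colj: "\<And>j. j \<in> {1..m} \<Longrightarrow>
      real n / 2 * (\<Sum>\<sigma>\<in>S. Fi j \<sigma>) - real (card S) * real n / 8 \<le> (\<Sum>\<sigma>\<in>S. cq j \<sigma>)"
  proof -
    fix j :: nat assume j: "j \<in> {1..m}"
    have per: "\<And>\<sigma>. real n * (\<Sum>r\<in>{1..n}. Fi j (\<sigma>(j:=r))) / 2 - real n ^ 2 / 8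
                  \<le> (\<Sum>r\<in>{1..n}. cq j (\<sigma>(j:=r)))"
    proof -
      fix \<sigma> :: "nat \<Rightarrow> nat"
      have "(\<Sum>r\<in>{1..n}. Fi j (\<sigma>(j:=r))) =
            real (card {r\<in>{1..n}. (r, j) \<in> qset T (zin n m (\<sigma>(j:=r)))})"
        unfolding Fi_def by (simp add: indicator_sum_card)
      then show "real n * (\<Sum>r\<in>{1..n}. Fi j (\<sigma>(j:=r))) / 2 - real n ^ 2 / 8
                  \<le> (\<Sum>r\<in>{1..n}. cq j (\<sigma>(j:=r)))"
        using col_needle[OF j, of n T \<sigma>] unfolding cq_def by simp
    qed
    have "real n * (\<Sum>\<sigma>\<in>S. cq j \<sigma>) = (\<Sum>\<sigma>\<in>S. \<Sum>r\<in>{1..n}. cq j (\<sigma>(j:=r)))"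
      unfolding S_def using fiber[of "{1..m}" "{1..n}" j "cq j"] j by simp
    also have "\<dots> \<ge> (\<Sum>\<sigma>\<in>S. real n * (\<Sum>r\<in>{1..n}. Fi j (\<sigma>(j:=r))) / 2 - real n ^ 2 / 8)"
      by (rule sum_mono) (rule per)
    finally have A: "(\<Sum>\<sigma>\<in>S. real n * (\<Sum>r\<in>{1..n}. Fi j (\<sigma>(j:=r))) / 2 - real n ^ 2 / 8)
                     \<le> real n * (\<Sum>\<sigma>\<in>S. cq j \<sigma>)" .
    have B: "(\<Sum>\<sigma>\<in>S. real n * (\<Sum>r\<in>{1..n}. Fi j (\<sigma>(j:=r))) / 2 - real n ^ 2 / 8)
          = real n / 2 * (\<Sum>\<sigma>\<in>S. \<Sum>r\<in>{1..n}. Fi j (\<sigma>(j:=r))) - real (card S) * real n ^ 2 / 8"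
      by (simp add: sum_subtractf sum_distrib_left sum_divide_distrib)
    have D: "(\<Sum>\<sigma>\<in>S. \<Sum>r\<in>{1..n}. Fi j (\<sigma>(j:=r))) = real n * (\<Sum>\<sigma>\<in>S. Fi j \<sigma>)"
      unfolding S_def using fiber[of "{1..m}" "{1..n}" j "Fi j"] j by simp
    have "real n * (real n / 2 * (\<Sum>\<sigma>\<in>S. Fi j \<sigma>) - real (card S) * real n / 8)
          \<le> real n * (\<Sum>\<sigma>\<in>S. cq j \<sigma>)"
      using A unfolding B D by (simp add: algebra_simps power2_eq_square)
    moreover have "0 < real n" using n8 by simp
    ultimately show "real n / 2 * (\<Sum>\<sigma>\<in>S. Fi j \<sigma>) - real (card S) * real n / 8 \<le> (\<Sum>\<sigma>\<in>S. cq j \<sigma>)"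
      by simp
  qed
  have sumC: "real n / 2 * (\<Sum>\<sigma>\<in>S. \<Sum>j\<in>{1..m}. Fi j \<sigma>) - real m * (real (card S) * real n / 8)
               \<le> (\<Sum>\<sigma>\<in>S. C \<sigma>)"
  proof -
    have "(\<Sum>j\<in>{1..m}. real n / 2 * (\<Sum>\<sigma>\<in>S. Fi j \<sigma>) - real (card S) * real n / 8)
          \<le> (\<Sum>j\<in>{1..m}. \<Sum>\<sigma>\<in>S. cq j \<sigma>)"
      by (rule sum_mono) (rule colj)
    also have "\<dots> = (\<Sum>\<sigma>\<in>S. \<Sum>j\<in>{1..m}. cq j \<sigma>)" by (rule sum.swap)
    also have "\<dots> \<le> (\<Sum>\<sigma>\<in>S. C \<sigma>)"
      by (rule sum_mono) (unfold cq_def C_def, rule cols_le_cost)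
    finally have "(\<Sum>j\<in>{1..m}. real n / 2 * (\<Sum>\<sigma>\<in>S. Fi j \<sigma>) - real (card S) * real n / 8) \<le> (\<Sum>\<sigma>\<in>S. C \<sigma>)" .
    moreover have "(\<Sum>j\<in>{1..m}. real n / 2 * (\<Sum>\<sigma>\<in>S. Fi j \<sigma>) - real (card S) * real n / 8)
        = real n / 2 * (\<Sum>\<sigma>\<in>S. \<Sum>j\<in>{1..m}. Fi j \<sigma>) - real m * (real (card S) * real n / 8)"
    proof -
      have "(\<Sum>j\<in>{1..m}. \<Sum>\<sigma>\<in>S. Fi j \<sigma>) = (\<Sum>\<sigma>\<in>S. \<Sum>j\<in>{1..m}. Fi j \<sigma>)"
        by (rule sum.swap)
      moreover have "(\<Sum>j\<in>{1..m}. real n / 2 * (\<Sum>\<sigma>\<in>S. Fi j \<sigma>) - real (card S) * real n / 8)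
          = real n / 2 * (\<Sum>j\<in>{1..m}. \<Sum>\<sigma>\<in>S. Fi j \<sigma>) - real m * (real (card S) * real n / 8)"
        unfolding sum_subtractf sum_distrib_left[symmetric] by simp
      ultimately show ?thesis by simp
    qed
    ultimately show ?thesis by simp
  qed
  define GG where "GG = {\<sigma>\<in>S. 8 * cost T (zin n m \<sigma>) < n * m}"
  have fGG: "finite GG" using fS GG_def by simp
  have GGS: "GG \<subseteq> S" unfolding GG_def by auto
  have Fpos: "\<And>\<sigma>. 0 \<le> (\<Sum>j\<in>{1..m}. Fi j \<sigma>)" unfolding Fi_def by (rule sum_nonneg) simp
  have Fbig: "\<And>\<sigma>. \<sigma> \<in> GG \<Longrightarrow> real m / 2 \<le> (\<Sum>j\<in>{1..m}. Fi j \<sigma>)"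
  proof -
    fix \<sigma> assume s: "\<sigma> \<in> GG"
    have cU: "card {j\<in>{1..m}. (\<sigma> j, j) \<notin> qset T (zin n m \<sigma>)} < k"
      using completion[OF n8 m3 k1 km _ corr] s unfolding GG_def S_def by blast
    have "(\<Sum>j\<in>{1..m}. Fi j \<sigma>) + (\<Sum>j\<in>{1..m}. if (\<sigma> j, j) \<notin> qset T (zin n m \<sigma>) then 1 else 0)
          = (\<Sum>j\<in>{1..m}. (1::real))"
      unfolding sum.distrib[symmetric] Fi_def by (rule sum.cong) auto
    then have "(\<Sum>j\<in>{1..m}. Fi j \<sigma>) = real m - real (card {j\<in>{1..m}. (\<sigma> j, j) \<notin> qset T (zin n m \<sigma>)})"
      by (simp add: indicator_sum_card)
    moreover have "real (card {j\<in>{1..m}. (\<sigma> j, j) \<notin> qset T (zin n m \<sigma>)}) \<le> real k - 1"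
      using cU k1 by linarith
    moreover have "2 * real k < real m" using km by linarith
    ultimately show "real m / 2 \<le> (\<Sum>j\<in>{1..m}. Fi j \<sigma>)" by linarith
  qed
  have sumF: "real (card GG) * (real m / 2) \<le> (\<Sum>\<sigma>\<in>S. \<Sum>j\<in>{1..m}. Fi j \<sigma>)"
  proof -
    have "(\<Sum>\<sigma>\<in>S. if \<sigma> \<in> GG then real m / 2 else 0) \<le> (\<Sum>\<sigma>\<in>S. \<Sum>j\<in>{1..m}. Fi j \<sigma>)"
      by (rule sum_mono) (use Fbig Fpos in auto)
    moreover have "(\<Sum>\<sigma>\<in>S. if \<sigma> \<in> GG then real m / 2 else 0) = real (card GG) * (real m / 2)"
      using fS GGS by (simp add: sum.If_cases Int_absorb1)
    ultimately show ?thesis by simp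
  qed
  have sumC2: "(real (card S) - real (card GG)) * (real n * real m / 8) \<le> (\<Sum>\<sigma>\<in>S. C \<sigma>)"
  proof -
    have "(\<Sum>\<sigma>\<in>S. if \<sigma> \<in> GG then 0 else real n * real m / 8) \<le> (\<Sum>\<sigma>\<in>S. C \<sigma>)"
    proof (rule sum_mono)
      fix \<sigma> assume s: "\<sigma> \<in> S"
      show "(if \<sigma> \<in> GG then 0 else real n * real m / 8) \<le> C \<sigma>"
      proof (cases "\<sigma> \<in> GG")
        case True then show ?thesis unfolding C_def by simp
      next
        case False
        then have "n * m \<le> 8 * cost T (zin n m \<sigma>)" using s unfolding GG_def by auto
        then have "real (n * m) \<le> real (8 * cost T (zin n m \<sigma>))" by (rule of_nat_mono)
        then show ?thesis using False unfolding C_def by simp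
      qed
    qed
    moreover have "(\<Sum>\<sigma>\<in>S. if \<sigma> \<in> GG then 0 else real n * real m / 8)
                   = (real (card S) - real (card GG)) * (real n * real m / 8)"
    proof -
      have "S - GG = {x \<in> S. x \<notin> GG}" by auto
      then have "card {x \<in> S. x \<notin> GG} = card S - card GG" using card_Diff_subset[OF fGG GGS] by simp
      moreover have "card GG \<le> card S" using card_mono[OF fS GGS] .
      ultimately show ?thesis using fS by (simp add: sum.If_cases Int_def of_nat_diff algebra_simps)
    qed
    ultimately show ?thesis by simp
  qed
  have cGS: "real (card GG) \<le> real (card S)" using card_mono[OF fS GGS] by simp
  have nm0: "0 \<le> real n * real m" by simp
  have fin: "real (card S) * (real n * real m) / 24 \<le> (\<Sum>\<sigma>\<in>S. C \<sigma>)"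
  proof (cases "3 * real (card GG) \<ge> 2 * real (card S)")
    case True
    have "real n / 2 * (real (card GG) * (real m / 2)) \<le> real n / 2 * (\<Sum>\<sigma>\<in>S. \<Sum>j\<in>{1..m}. Fi j \<sigma>)"
      by (rule mult_left_mono[OF sumF]) simp
    then have "real (card GG) * (real n * real m) / 4 - real (card S) * (real n * real m) / 8 \<le> (\<Sum>\<sigma>\<in>S. C \<sigma>)"
      using sumC by (simp add: algebra_simps)
    moreover have "real (card S) * (real n * real m) / 24 \<le> real (card GG) * (real n * real m) / 4 - real (card S) * (real n * real m) / 8"
    proof -
      have "2 * real (card S) * (real n * real m) \<le> 3 * real (card GG) * (real n * real m)"
        using True nm0 by (simp add: mult_right_mono)
      then show ?thesis by (simp add: algebra_simps)
    qed
    ultimately show ?thesis by linarith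
  next
    case False
    have "real (card S) * (real n * real m) / 24 \<le> (real (card S) - real (card GG)) * (real n * real m / 8)"
    proof -
      have "real (card S) * (real n * real m) \<le> 3 * (real (card S) - real (card GG)) * (real n * real m)"
        using False nm0 by (intro mult_right_mono) simp_all
      then show ?thesis by (simp add: algebra_simps)
    qed
    then show ?thesis using sumC2 by linarith
  qed
  then show ?thesis unfolding S_def C_def .
qed



lemma R0_bound:
  assumes n8: "8 \<le> n" and m3: "3 \<le> m" and k1: "1 \<le> k" and km: "2 * k < m"
  shows "ennreal (1/24 * real n * real m) \<le> R0 (inputs n m) (h k n m)"
  unfolding R0_def
proof (rule INF_greatest)
  fix \<mu> :: "dtree pmf"
  assume "\<mu> \<in> {\<mu>. \<forall>T\<in>set_pmf \<mu>. \<forall>x\<in>inputs n m. eval T x = h k n m x}"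
  then have corr: "\<And>T. T \<in> set_pmf \<mu> \<Longrightarrow> \<forall>x\<in>inputs n m. eval T x = h k n m x" by blast
  define S where "S = PiE {1..m} (\<lambda>_. {1..n::nat})"
  define M where "M = (SUP x\<in>inputs n m. \<integral>\<^sup>+ T. ennreal (real (cost T x)) \<partial>measure_pmf \<mu>)"
  have fS: "finite S" unfolding S_def by (simp add: finite_PiE)
  have cS: "card S > 0" unfolding S_def using n8 by (simp add: card_PiE)
  have le: "\<And>\<sigma>. \<sigma> \<in> S \<Longrightarrow> (\<integral>\<^sup>+ T. ennreal (real (cost T (zin n m \<sigma>))) \<partial>measure_pmf \<mu>) \<le> M"
    unfolding M_def using zin_inputs S_def by (intro SUP_upper) blast
  have "(\<Sum>\<sigma>\<in>S. \<integral>\<^sup>+ T. ennreal (real (cost T (zin n m \<sigma>))) \<partial>measure_pmf \<mu>)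
        = (\<integral>\<^sup>+ T. (\<Sum>\<sigma>\<in>S. ennreal (real (cost T (zin n m \<sigma>)))) \<partial>measure_pmf \<mu>)"
    by (rule nn_integral_sum[symmetric]) simp
  also have "\<dots> = (\<integral>\<^sup>+ T. ennreal (\<Sum>\<sigma>\<in>S. real (cost T (zin n m \<sigma>))) \<partial>measure_pmf \<mu>)"
    by simp
  also have "\<dots> \<ge> (\<integral>\<^sup>+ T. ennreal (real (card S) * (real n * real m) / 24) \<partial>measure_pmf \<mu>)"
  proof (rule nn_integral_mono_AE)
    show "AE T in measure_pmf \<mu>. ennreal (real (card S) * (real n * real m) / 24)
            \<le> ennreal (\<Sum>\<sigma>\<in>S. real (cost T (zin n m \<sigma>)))"
    proof (rule AE_pmfI)
      fix T assume "T \<in> set_pmf \<mu>"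
      then show "ennreal (real (card S) * (real n * real m) / 24)
            \<le> ennreal (\<Sum>\<sigma>\<in>S. real (cost T (zin n m \<sigma>)))"
        using det_bound[OF n8 m3 k1 km corr] unfolding S_def by (simp add: ennreal_leI)
    qed
  qed
  also have "(\<integral>\<^sup>+ T. ennreal (real (card S) * (real n * real m) / 24) \<partial>measure_pmf \<mu>)
             = ennreal (real (card S) * (real n * real m) / 24)"
    by (simp add: measure_pmf.emeasure_space_1)
  finally have A: "ennreal (real (card S) * (real n * real m) / 24)
      \<le> (\<Sum>\<sigma>\<in>S. \<integral>\<^sup>+ T. ennreal (real (cost T (zin n m \<sigma>))) \<partial>measure_pmf \<mu>)" .
  also have "\<dots> \<le> (\<Sum>\<sigma>\<in>S. M)" by (rule sum_mono) (rule le)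
  also have "\<dots> = of_nat (card S) * M" by simp
  finally have B0: "ennreal (real (card S) * (real n * real m) / 24) \<le> of_nat (card S) * M" .
  have E: "of_nat (card S) * ennreal (1/24 * real n * real m) = ennreal (real (card S) * (real n * real m) / 24)"
  proof -
    have "of_nat (card S) * ennreal (1/24 * real n * real m) = ennreal (real (card S)) * ennreal (1/24 * real n * real m)"
      by (simp add: ennreal_of_nat_eq_real_of_nat)
    also have "\<dots> = ennreal (real (card S) * (1/24 * real n * real m))"
      by (rule ennreal_mult[symmetric]) simp_all
    finally show ?thesis by (simp add: algebra_simps)
  qed
  have B: "of_nat (card S) * ennreal (1/24 * real n * real m) \<le> of_nat (card S) * M"
    unfolding E by (rule B0)
  have "of_nat (card S) \<noteq> (0::ennreal)" using cS by simp
  moreover have "of_nat (card S) \<noteq> (top::ennreal)" by simp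
  ultimately show "ennreal (1/24 * real n * real m) \<le> M"
    using B ennreal_mult_le_mult_iff by blast
qed

theorem theorem15:
  shows "\<exists>c::real. c > 0 \<and> (\<exists>N::nat. \<forall>n m k :: nat.
           N \<le> n \<longrightarrow> N \<le> m \<longrightarrow> 1 \<le> k \<longrightarrow> 2 * k < m \<longrightarrow>
           ennreal (c * real n * real m) \<le> R0 (inputs n m) (h k n m))"
proof (intro exI conjI allI impI)
  show "(1/24::real) > 0" by simp
  fix n m k :: nat
  assume "8 \<le> n" "8 \<le> m" "1 \<le> k" "2 * k < m"
  then show "ennreal (1/24 * real n * real m) \<le> R0 (inputs n m) (h k n m)"
    using R0_bound by simp
qed


end
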